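(* Let $1\le b<\frac{n}{2}-1$ and let $T$ be a tree attaining the maximum value of $M_2$ over $\mathcal{CT}^*_{n,b}$. If $T$ contains a pendent vertex adjacent to a branching vertex, then $T$ contains no pendent path of length greater than $2$.
   Context: A chemical tree is a tree with maximum degree at most $4$. A pendent vertex has degree $1$; a branching vertex has degree greater than $2$. A pendent path is a path $u_0\cdots u_r$ ($r\ge1$) with $u_0$ pendent, $u_r$ branching and all internal vertices of degree $2$; its length is $r$. $\mathcal{CT}^*_{n,b}$ is the class of all $n$-vertex chemical trees with exactly $b$ branching vertices. $M_2(G)=\sum_{uv\in E(G)}d_ud_v$, where $d_v$ is the degree of $v$. *)

theory Defs
  imports Complex_Main
begin

definition simple_graph :: "nat set \<Rightarrow> nat set set \<Rightarrow> bool" where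
  "simple_graph V E \<longleftrightarrow> finite V \<and>
     (\<forall>e\<in>E. \<exists>u v. u \<in> V \<and> v \<in> V \<and> u \<noteq> v \<and> e = {u, v})"

definition degree :: "nat set set \<Rightarrow> nat \<Rightarrow> nat" where
  "degree E v = card {e \<in> E. v \<in> e}"

definition adj :: "nat set set \<Rightarrow> nat \<Rightarrow> nat \<Rightarrow> bool" where
  "adj E u v \<longleftrightarrow> {u, v} \<in> E"

definition connected_graph :: "nat set \<Rightarrow> nat set set \<Rightarrow> bool" where
  "connected_graph V E \<longleftrightarrow>
     (\<forall>u\<in>V. \<forall>v\<in>V. (u, v) \<in> {(x, y). adj E x y}\<^sup>*)"

definition is_tree :: "nat set \<Rightarrow> nat set set \<Rightarrow> bool" where
  "is_tree V E \<longleftrightarrow> simple_graph V E \<and> V \<noteq> {} \<and> connected_graph V E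
     \<and> card E + 1 = card V"

definition chemical_tree :: "nat set \<Rightarrow> nat set set \<Rightarrow> bool" where
  "chemical_tree V E \<longleftrightarrow> is_tree V E \<and> (\<forall>v\<in>V. degree E v \<le> 4)"

definition pendent :: "nat set set \<Rightarrow> nat \<Rightarrow> bool" where
  "pendent E v \<longleftrightarrow> degree E v = 1"

definition branching :: "nat set set \<Rightarrow> nat \<Rightarrow> bool" where
  "branching E v \<longleftrightarrow> degree E v > 2"

definition branching_vertices :: "nat set \<Rightarrow> nat set set \<Rightarrow> nat set" where
  "branching_vertices V E = {v \<in> V. branching E v}"

definition CT_star :: "nat \<Rightarrow> nat \<Rightarrow> (nat set \<times> nat set set) set" where
  "CT_star n b = {(V, E). chemical_tree V E \<and> card V = n
                    \<and> card (branching_vertices V E) = b}"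

definition M2 :: "nat set set \<Rightarrow> nat" where
  "M2 E = (\<Sum>e\<in>E. \<Prod>v\<in>e. degree E v)"

definition pendent_path :: "nat set \<Rightarrow> nat set set \<Rightarrow> nat list \<Rightarrow> bool" where
  "pendent_path V E p \<longleftrightarrow> length p \<ge> 2 \<and> distinct p \<and> set p \<subseteq> V
     \<and> (\<forall>i. i + 1 < length p \<longrightarrow> adj E (p ! i) (p ! (i + 1)))
     \<and> pendent E (hd p) \<and> branching E (last p)
     \<and> (\<forall>i. 0 < i \<and> i + 1 < length p \<longrightarrow> degree E (p ! i) = 2)"

definition path_length :: "nat list \<Rightarrow> nat" where
  "path_length p = length p - 1"

end

theory Submission
  imports Defs
begin

lemma leaf_avoid:
  assumes nb: "\<And>y. (u0, y) \<in> R \<or> (y, u0) \<in> R \<Longrightarrow> y = u1"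
    and "(a, y) \<in> R\<^sup>*" and "a \<noteq> u0"
  shows "(y \<noteq> u0 \<longrightarrow> (a, y) \<in> {(s,t). (s,t) \<in> R \<and> s \<noteq> u0 \<and> t \<noteq> u0}\<^sup>*)
       \<and> (y = u0 \<longrightarrow> (a, u1) \<in> {(s,t). (s,t) \<in> R \<and> s \<noteq> u0 \<and> t \<noteq> u0}\<^sup>*)"
  using assms(2)
proof (induction rule: rtrancl_induct)
  case base
  then show ?case using assms(3) by auto
next
  case (step y z)
  show ?case
  proof (cases "z = u0")
    case True
    then have "y = u1" using nb step(2) by auto
    then show ?thesis using step True
      by (metis (no_types, lifting) assms(1) assms(3) rtrancl.rtrancl_refl)
  next
    case False
    show ?thesis
    proof (cases "y = u0")
      case True
      then have "z = u1" using nb step(2) by auto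
      then show ?thesis using step True False by auto
    next
      case False2: False
      then show ?thesis using step False
        by (simp add: rtrancl.rtrancl_into_rtrancl)
    qed
  qed
qed

lemma neq_pair: "a \<notin> {c, d} \<Longrightarrow> {a, b} \<noteq> {c, d}"
  by auto

lemma filt_ins: "{e \<in> insert a (A - {c}). v \<in> e} = (if v \<in> a then insert a ({e \<in> A. v \<in> e} - {c})
      else {e \<in> A. v \<in> e} - {c})"
  by auto

lemma dec3: "a \<in> E \<Longrightarrow> b \<in> E \<Longrightarrow> c \<in> E \<Longrightarrow> E = insert a (insert b (insert c (E - {a, b, c})))"
  by auto

lemma dec2: "b \<in> E \<Longrightarrow> c \<in> E \<Longrightarrow> b \<noteq> a \<Longrightarrow> c \<noteq> a \<Longrightarrow>
   E - {a} = insert b (insert c (E - {a, b, c}))"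
  by auto

theorem lemma12:
  fixes n b :: nat and V :: "nat set" and E :: "nat set set"
  assumes "1 \<le> b" and "real b < real n / 2 - 1"
    and "(V, E) \<in> CT_star n b"
    and "\<forall>(V', E') \<in> CT_star n b. M2 E' \<le> M2 E"
    and "\<exists>u\<in>V. \<exists>v\<in>V. pendent E u \<and> branching E v \<and> adj E u v"
  shows "\<not> (\<exists>p. pendent_path V E p \<and> path_length p > 2)"
proof
  assume "\<exists>p. pendent_path V E p \<and> path_length p > 2"
  then obtain p where pp: "pendent_path V E p" and pl: "path_length p > 2" by blast
  obtain x w where xV: "x \<in> V" and wV: "w \<in> V" and px: "pendent E x" and bw: "branching E w"
    and axw: "adj E x w" using assms(5) by blast
  have ct: "chemical_tree V E" and cV: "card V = n" and cB: "card (branching_vertices V E) = b"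
    using assms(3) by (auto simp: CT_star_def)
  have sg: "simple_graph V E" and Vne: "V \<noteq> {}" and cE: "card E + 1 = card V"
    and deg4: "\<forall>v\<in>V. degree E v \<le> 4"
    using ct by (auto simp: chemical_tree_def is_tree_def)
  have finV: "finite V" using sg by (simp add: simple_graph_def)
  have EV: "E \<subseteq> Pow V"
  proof
    fix e assume "e \<in> E"
    then obtain u v where "u \<in> V" "v \<in> V" "e = {u, v}" using sg unfolding simple_graph_def by blast
    then show "e \<in> Pow V" by auto
  qed
  have finE: "finite E" using finite_subset[OF EV] finV by simp
  define u0 u1 u2 where "u0 = p ! 0" and "u1 = p ! 1" and "u2 = p ! 2"
  have len: "length p \<ge> 4" using pl by (simp add: path_length_def)
  have dp: "distinct p" and sp: "set p \<subseteq> V" using pp by (auto simp: pendent_path_def)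
  have pne: "p \<noteq> []" using len by auto
  have u01: "u0 \<noteq> u1" "u0 \<noteq> u2" "u1 \<noteq> u2"
    using nth_eq_iff_index_eq[OF dp, of 0 1] nth_eq_iff_index_eq[OF dp, of 0 2]
      nth_eq_iff_index_eq[OF dp, of 1 2] len pne unfolding u0_def u1_def u2_def by auto
  have l0: "0 < length p" "1 < length p" "2 < length p" using len by linarith+
  have "p ! 0 \<in> set p" "p ! 1 \<in> set p" "p ! 2 \<in> set p" using nth_mem l0 by blast+
  then have uV: "u0 \<in> V" "u1 \<in> V" "u2 \<in> V" using sp unfolding u0_def u1_def u2_def
    by auto
  have adjp: "\<forall>i. i + 1 < length p \<longrightarrow> adj E (p ! i) (p ! (i + 1))"
    using pp by (simp add: pendent_path_def)
  have a01: "{u0, u1} \<in> E" using adjp[rule_format, of 0] len unfolding u0_def u1_def adj_def by simp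
  have a12: "{u1, u2} \<in> E" using adjp[rule_format, of 1] len unfolding u1_def u2_def adj_def
    by (simp add: numeral_2_eq_2)
  have degp: "\<forall>i. 0 < i \<and> i + 1 < length p \<longrightarrow> degree E (p ! i) = 2"
    using pp by (simp add: pendent_path_def)
  have pe0: "pendent E (hd p)" using pp by (simp add: pendent_path_def)
  have d0: "degree E u0 = 1" using pe0 hd_conv_nth[OF pne] unfolding u0_def pendent_def
    by simp
  have d1: "degree E u1 = 2" using degp[rule_format, of 1] len unfolding u1_def by simp
  have d2: "degree E u2 = 2" using degp[rule_format, of 2] len unfolding u2_def by simp
  have dx: "degree E x = 1" using px by (simp add: pendent_def)
  have dw: "degree E w \<ge> 3" using bw by (simp add: branching_def)
  have xw: "{x, w} \<in> E" using axw by (simp add: adj_def)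
  have F1: "{e \<in> E. u0 \<in> e} = {{u0, u1}}"
  proof -
    have "card {e \<in> E. u0 \<in> e} = 1" using d0 by (simp add: degree_def)
    then obtain e where "{e \<in> E. u0 \<in> e} = {e}" by (meson card_1_singletonE)
    moreover have "{u0,u1} \<in> {e \<in> E. u0 \<in> e}" using a01 by simp
    ultimately show ?thesis by auto
  qed
  have F2: "{e \<in> E. x \<in> e} = {{x, w}}"
  proof -
    have "card {e \<in> E. x \<in> e} = 1" using dx by (simp add: degree_def)
    then obtain e where "{e \<in> E. x \<in> e} = {e}" by (meson card_1_singletonE)
    moreover have "{x,w} \<in> {e \<in> E. x \<in> e}" using xw by simp
    ultimately show ?thesis by auto
  qed
  have F3: "{e \<in> E. u1 \<in> e} = {{u0, u1}, {u1, u2}}"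
  proof -
    have c2: "card {e \<in> E. u1 \<in> e} = 2" using d1 by (simp add: degree_def)
    have sub: "{{u0, u1}, {u1, u2}} \<subseteq> {e \<in> E. u1 \<in> e}" using a01 a12 by auto
    have "card {{u0, u1}, {u1, u2}} = 2" using u01 by (auto simp: doubleton_eq_iff)
    then show ?thesis using card_subset_eq[OF _ sub] c2 finE by auto
  qed
  have nb0: "\<And>y. {u0, y} \<in> E \<Longrightarrow> y = u1"
  proof -
    fix y assume "{u0, y} \<in> E"
    then have "{u0, y} \<in> {e \<in> E. u0 \<in> e}" by simp
    then have "{u0, y} = {u0, u1}" using F1 by simp
    then show "y = u1" using u01 by (simp add: doubleton_eq_iff)
  qed
  have xnu: "x \<noteq> u0" "x \<noteq> u1" "x \<noteq> u2"
  proof -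
    show "x \<noteq> u1" using dx d1 by auto
    show "x \<noteq> u2" using dx d2 by auto
    show "x \<noteq> u0"
    proof
      assume "x = u0"
      then have "w = u1" using nb0 xw by auto
      then show False using dw d1 by auto
    qed
  qed
  have wnu: "w \<noteq> u0" "w \<noteq> u1" "w \<noteq> u2" "w \<noteq> x" using dw d0 d1 d2 dx by auto
  define E' where "E' = insert {u0, x} (E - {{u0, u1}})"
  have n0x: "{u0, x} \<notin> E" using nb0[of x] xnu by blast
  have cE': "card E' = card E"
  proof -
    have "card (E - {{u0, u1}}) = card E - 1" using finE a01 by (simp add: card_Diff_singleton)
    moreover have "card E \<ge> 1" using finE a01 card_0_eq by fastforce
    ultimately show ?thesis unfolding E'_def using n0x finE by simp
  qed
  have ds: "{u0, u1} \<noteq> {u1, u2}" "{u0, u1} \<noteq> {x, w}" "{u1, u2} \<noteq> {x, w}"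
     "{u0, x} \<noteq> {u1, u2}" "{u0, x} \<noteq> {x, w}" "{u0, x} \<noteq> {u0, u1}"
    "{u1, u2} \<noteq> {u0, u1}" "{x, w} \<noteq> {u0, u1}"
    using neq_pair[of u0 u1 u2 u1] neq_pair[of u0 x w u1] neq_pair[of u1 x w u2]
      neq_pair[of u0 u1 u2 x] neq_pair[of u0 x w x] neq_pair[of x u0 u1 u0] 
      u01 xnu wnu by (auto simp: insert_commute)
  have Gen: "\<And>v. {e \<in> E'. v \<in> e} = (if v \<in> {u0, x} then insert {u0, x} ({e \<in> E. v \<in> e} - {{u0, u1}})
      else {e \<in> E. v \<in> e} - {{u0, u1}})"
    unfolding E'_def by (rule filt_ins)
  have G0: "{e \<in> E'. u0 \<in> e} = {{u0, x}}" using Gen[of u0] F1 by simp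
  have G1: "{e \<in> E'. u1 \<in> e} = {{u1, u2}}" using Gen[of u1] F3 xnu u01 ds by simp
  have Gx: "{e \<in> E'. x \<in> e} = {{u0, x}, {x, w}}" using Gen[of x] F2 ds by simp
  have Gv: "\<And>v. v \<noteq> u0 \<Longrightarrow> v \<noteq> u1 \<Longrightarrow> v \<noteq> x \<Longrightarrow> {e \<in> E'. v \<in> e} = {e \<in> E. v \<in> e}"
  proof -
    fix v assume "v \<noteq> u0" "v \<noteq> u1" "v \<noteq> x"
    then have "{u0, u1} \<notin> {e \<in> E. v \<in> e}" by simp
    then show "{e \<in> E'. v \<in> e} = {e \<in> E. v \<in> e}" using Gen[of v] \<open>v \<noteq> u0\<close> \<open>v \<noteq> x\<close> by simp
  qed
  have e0: "degree E' u0 = 1" using G0 by (simp add: degree_def)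
  have e1: "degree E' u1 = 1" using G1 by (simp add: degree_def)
  have ex: "degree E' x = 2" using Gx ds by (simp add: degree_def)
  have ev: "\<And>v. v \<noteq> u0 \<Longrightarrow> v \<noteq> u1 \<Longrightarrow> v \<noteq> x \<Longrightarrow> degree E' v = degree E v"
    using Gv by (simp add: degree_def)
  define Rest where "Rest = E - {{u0, u1}, {u1, u2}, {x, w}}"
  have restv: "\<And>e v. e \<in> Rest \<Longrightarrow> v \<in> e \<Longrightarrow> v \<noteq> u0 \<and> v \<noteq> u1 \<and> v \<noteq> x"
  proof -
    fix e v assume eR: "e \<in> Rest" and ve: "v \<in> e"
    have eE: "e \<in> E" and ne: "e \<noteq> {u0, u1}" "e \<noteq> {u1, u2}" "e \<noteq> {x, w}"
      using eR unfolding Rest_def by auto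
    have "v \<noteq> u0"
    proof
      assume "v = u0" then have "e \<in> {e \<in> E. u0 \<in> e}" using eE ve by simp
      then show False using F1 ne by simp
    qed
    moreover have "v \<noteq> u1"
    proof
      assume "v = u1" then have "e \<in> {e \<in> E. u1 \<in> e}" using eE ve by simp
      then show False using F3 ne by simp
    qed
    moreover have "v \<noteq> x"
    proof
      assume "v = x" then have "e \<in> {e \<in> E. x \<in> e}" using eE ve by simp
      then show False using F2 ne by simp
    qed
    ultimately show "v \<noteq> u0 \<and> v \<noteq> u1 \<and> v \<noteq> x" by simp
  qed
  have finR: "finite Rest" using finE by (simp add: Rest_def)
  have restP: "(\<Sum>e\<in>Rest. \<Prod>v\<in>e. degree E' v) = (\<Sum>e\<in>Rest. \<Prod>v\<in>e. degree E v)"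
    by (rule sum.cong[OF refl], rule prod.cong[OF refl]) (use restv ev in blast)
  have nR: "{u0, u1} \<notin> Rest" "{u1, u2} \<notin> Rest" "{x, w} \<notin> Rest" "{u0, x} \<notin> Rest"
    unfolding Rest_def using n0x by auto
  have Edec: "E = insert {u0, u1} (insert {u1, u2} (insert {x, w} Rest))"
    unfolding Rest_def using a01 a12 xw by (rule dec3)
  have Edm: "E - {{u0, u1}} = insert {u1, u2} (insert {x, w} Rest)"
    unfolding Rest_def using a12 xw ds(7,8) by (rule dec2)
  have E'dec: "E' = insert {u0, x} (insert {u1, u2} (insert {x, w} Rest))"
    unfolding E'_def Edm ..
  have d2': "degree E' u2 = 2" using ev[of u2] u01 xnu d2 by auto
  have dw': "degree E' w = degree E w" using ev[of w] wnu by auto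
  have n1: "{u0, u1} \<notin> insert {u1, u2} (insert {x, w} Rest)" using ds nR by simp
  have n2: "{u1, u2} \<notin> insert {x, w} Rest" using ds nR by simp
  have n3: "{u0, x} \<notin> insert {u1, u2} (insert {x, w} Rest)" using ds nR by simp
  have p01: "\<And>f. (\<Prod>v\<in>{u0, u1}. f v) = f u0 * (f u1 :: nat)" using u01 by simp
  have p12: "\<And>f. (\<Prod>v\<in>{u1, u2}. f v) = f u1 * (f u2 :: nat)" using u01 by simp
  have pxw: "\<And>f. (\<Prod>v\<in>{x, w}. f v) = f x * (f w :: nat)" using wnu by simp
  have p0x: "\<And>f. (\<Prod>v\<in>{u0, x}. f v) = f u0 * (f x :: nat)" using xnu by simp
  have sE: "sum f E = f {u0, u1} + (f {u1, u2} + (f {x, w} + sum f Rest))" for f :: "nat set \<Rightarrow> nat"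
  proof -
    have "sum f E = sum f (insert {u0, u1} (insert {u1, u2} (insert {x, w} Rest)))"
      using Edec by (rule arg_cong)
    also have "... = f {u0, u1} + (f {u1, u2} + (f {x, w} + sum f Rest))"
      using finR n1 n2 nR by simp
    finally show ?thesis .
  qed
  have sE': "sum f E' = f {u0, x} + (f {u1, u2} + (f {x, w} + sum f Rest))" for f :: "nat set \<Rightarrow> nat"
  proof -
    have "sum f E' = sum f (insert {u0, x} (insert {u1, u2} (insert {x, w} Rest)))"
      using E'dec by (rule arg_cong)
    also have "... = f {u0, x} + (f {u1, u2} + (f {x, w} + sum f Rest))"
      using finR n3 n2 nR by simp
    finally show ?thesis .
  qed
  have "M2 E = (\<Prod>v\<in>{u0, u1}. degree E v) + ((\<Prod>v\<in>{u1, u2}. degree E v) +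
      ((\<Prod>v\<in>{x, w}. degree E v) + (\<Sum>e\<in>Rest. \<Prod>v\<in>e. degree E v)))"
    unfolding M2_def by (rule sE)
  also have "... = 1 * 2 + (2 * 2 + (1 * degree E w + (\<Sum>e\<in>Rest. \<Prod>v\<in>e. degree E v)))"
    unfolding p01 p12 pxw d0 d1 d2 dx ..
  finally have m1: "M2 E = 1 * 2 + (2 * 2 + (1 * degree E w + (\<Sum>e\<in>Rest. \<Prod>v\<in>e. degree E v)))" .
  have "M2 E' = (\<Prod>v\<in>{u0, x}. degree E' v) + ((\<Prod>v\<in>{u1, u2}. degree E' v) +
      ((\<Prod>v\<in>{x, w}. degree E' v) + (\<Sum>e\<in>Rest. \<Prod>v\<in>e. degree E' v)))"
    unfolding M2_def by (rule sE')
  also have "... = 1 * 2 + (1 * 2 + (2 * degree E w + (\<Sum>e\<in>Rest. \<Prod>v\<in>e. degree E v)))"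
    unfolding p0x p12 pxw e0 e1 d2' ex dw' restP ..
  finally have m2: "M2 E' = 1 * 2 + (1 * 2 + (2 * degree E w + (\<Sum>e\<in>Rest. \<Prod>v\<in>e. degree E v)))" .
  have gt: "M2 E < M2 E'" unfolding m1 m2 using dw by simp
  have sg': "simple_graph V E'" unfolding simple_graph_def
  proof (intro conjI ballI)
    show "finite V" by (rule finV)
    fix e assume "e \<in> E'"
    then have "e = {u0, x} \<or> e \<in> E" unfolding E'_def by blast
    then show "\<exists>u v. u \<in> V \<and> v \<in> V \<and> u \<noteq> v \<and> e = {u, v}"
    proof
      assume "e = {u0, x}" then show ?thesis using uV xV xnu by blast
    next
      assume "e \<in> E" then show ?thesis using sg unfolding simple_graph_def by blast
    qed
  qed
  have conn: "connected_graph V E" using ct by (simp add: chemical_tree_def is_tree_def)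
  define R where "R = {(a, b). adj E a b}"
  define R' where "R' = {(a, b). adj E' a b}"
  define R0 where "R0 = {(s,t). (s,t) \<in> R \<and> s \<noteq> u0 \<and> t \<noteq> u0}"
  have R0R': "R0 \<subseteq> R'"
  proof
    fix q assume "q \<in> R0"
    then obtain s t where q: "q = (s, t)" and st: "{s, t} \<in> E" "s \<noteq> u0" "t \<noteq> u0"
      unfolding R0_def R_def adj_def by blast
    have "{s, t} \<noteq> {u0, u1}" using neq_pair[of u0 u1 s t] st by (auto simp: eq_commute)
    then have "{s, t} \<in> E'" using st unfolding E'_def by blast
    then show "q \<in> R'" unfolding q R'_def adj_def by simp
  qed
  have nbR: "\<And>y. (u0, y) \<in> R \<or> (y, u0) \<in> R \<Longrightarrow> y = u1"
  proof -
    fix y assume "(u0, y) \<in> R \<or> (y, u0) \<in> R"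
    then have "{u0, y} \<in> E \<or> {y, u0} \<in> E" unfolding R_def adj_def by simp
    then have "{u0, y} \<in> E" by (simp add: insert_commute)
    then show "y = u1" by (rule nb0)
  qed
  have mainc: "\<And>a c. a \<in> V \<Longrightarrow> c \<in> V \<Longrightarrow> a \<noteq> u0 \<Longrightarrow> c \<noteq> u0 \<Longrightarrow> (a, c) \<in> R'\<^sup>*"
  proof -
    fix a c assume "a \<in> V" "c \<in> V" "a \<noteq> u0" "c \<noteq> u0"
    then have "(a, c) \<in> R\<^sup>*" using conn unfolding connected_graph_def R_def by auto
    then have "(a, c) \<in> R0\<^sup>*" using leaf_avoid[OF nbR _ \<open>a \<noteq> u0\<close>] \<open>c \<noteq> u0\<close>
      unfolding R0_def by blast
    then show "(a, c) \<in> R'\<^sup>*" using R0R' rtrancl_mono by blast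
  qed
  have x0a: "{u0, x} \<in> E'" unfolding E'_def by simp
  have x0: "(u0, x) \<in> R'" "(x, u0) \<in> R'" unfolding R'_def adj_def
    using x0a insert_commute[of x u0 "{}"] by simp_all
  have conn': "connected_graph V E'"
    unfolding connected_graph_def R'_def[symmetric]
  proof (intro ballI)
    fix a c assume aV: "a \<in> V" and cV: "c \<in> V"
    show "(a, c) \<in> R'\<^sup>*"
    proof (cases "a = u0")
      case True
      show ?thesis
      proof (cases "c = u0")
        case True
        then show ?thesis using \<open>a = u0\<close> by simp
      next
        case False
        then have "(x, c) \<in> R'\<^sup>*" using mainc xV cV xnu by blast
        then show ?thesis using x0 True by (meson converse_rtrancl_into_rtrancl)
      qed
    next
      case False
      show ?thesis
      proof (cases "c = u0")
        case True
        then have "(a, x) \<in> R'\<^sup>*" using mainc xV aV xnu False by blast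
        then show ?thesis using x0 True by (meson rtrancl_into_rtrancl)
      next
        case False2: False
        then show ?thesis using mainc aV cV False by blast
      qed
    qed
  qed
  have deg4': "\<forall>v\<in>V. degree E' v \<le> 4"
  proof
    fix v assume "v \<in> V"
    then show "degree E' v \<le> 4" using deg4 ev e0 e1 ex by (cases "v = u0 \<or> v = u1 \<or> v = x") auto
  qed
  have brs: "branching_vertices V E' = branching_vertices V E"
    unfolding branching_vertices_def branching_def
  proof (rule Collect_cong)
    fix v
    show "(v \<in> V \<and> 2 < degree E' v) = (v \<in> V \<and> 2 < degree E v)"
      using ev[of v] e0 e1 ex d0 d1 dx by (cases "v = u0 \<or> v = u1 \<or> v = x") auto
  qed
  have "(V, E') \<in> CT_star n b"
    unfolding CT_star_def chemical_tree_def is_tree_def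
    using sg' Vne conn' cE cE' deg4' brs cV cB by simp
  then have "M2 E' \<le> M2 E" using assms(4) by blast
  then show False using gt by simp
qed

end
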